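(* Let $T$ be a parity decision tree on $\{-1,1\}^n$ of depth $d$. Then there is a refinement $T'$ of $T$ which is a correlation-free parity decision tree of depth at most $2d$.
   Context: A parity decision tree on $\{-1,1\}^n$ is a rooted full binary tree whose internal nodes are labelled by subsets $S\subseteq[n]$, whose two outgoing edges are labelled $-1$ and $1$; an input $x$ follows from a node labelled $S$ the edge labelled $\prod_{i\in S}x_i$. Depth is the maximum number of internal nodes on a root-to-leaf path. A refinement of $T$ is a parity decision tree obtained from $T$ by replacing leaves with (parity decision) subtrees. A quantity (such as $x_i$ or $x_i\oplus x_j$) is fixed by the queries on a path if it is determined by the answers to the parities queried along that path. A tree is (pairwise) correlation-free (also called uncorrelated) if for every $i\ne j\in[n]$ and every path in it, whenever $x_i\oplus x_j$ is fixed by the queries in the path, so are $x_i$ and $x_j$. *)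

theory Defs
  imports Main
begin

text \<open>Coordinates of the cube are indexed by 0..<n.
  A node \<open>Node S t_neg t_pos\<close> queries the parity \<open>\<Prod>i\<in>S. x i\<close>;
  inputs with answer -1 go to \<open>t_neg\<close>, inputs with answer 1 go to \<open>t_pos\<close>.\<close>

datatype pdt = Leaf | Node "nat set" pdt pdt

fun valid_pdt :: "nat \<Rightarrow> pdt \<Rightarrow> bool" where
  "valid_pdt n Leaf = True"
| "valid_pdt n (Node S l r) = (S \<subseteq> {..<n} \<and> valid_pdt n l \<and> valid_pdt n r)"

fun depth :: "pdt \<Rightarrow> nat" where
  "depth Leaf = 0"
| "depth (Node S l r) = Suc (max (depth l) (depth r))"

fun refines :: "pdt \<Rightarrow> pdt \<Rightarrow> bool" where
  "refines Leaf T' = True"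
| "refines (Node S l r) Leaf = False"
| "refines (Node S l r) (Node S' l' r') = (S' = S \<and> refines l l' \<and> refines r r')"

definition cube :: "nat \<Rightarrow> (nat \<Rightarrow> int) set" where
  "cube n = {x. (\<forall>i<n. x i = -1 \<or> x i = 1) \<and> (\<forall>i\<ge>n. x i = 1)}"

fun leaf_paths :: "pdt \<Rightarrow> (nat set \<times> int) list set" where
  "leaf_paths Leaf = {[]}"
| "leaf_paths (Node S l r) =
     ((#) (S, -1)) ` leaf_paths l \<union> ((#) (S, 1)) ` leaf_paths r"

definition consistent :: "nat \<Rightarrow> (nat set \<times> int) list \<Rightarrow> (nat \<Rightarrow> int) set" where
  "consistent n p = {x \<in> cube n. \<forall>(S, b) \<in> set p. (\<Prod>i\<in>S. x i) = b}"

definition fixed :: "nat \<Rightarrow> (nat set \<times> int) list \<Rightarrow> ((nat \<Rightarrow> int) \<Rightarrow> int) \<Rightarrow> bool" where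
  "fixed n p f = (\<forall>x\<in>consistent n p. \<forall>y\<in>consistent n p. f x = f y)"

text \<open>In \<plusminus>1 notation, x_i \<oplus> x_j corresponds to the product x_i * x_j.\<close>
definition correlation_free :: "nat \<Rightarrow> pdt \<Rightarrow> bool" where
  "correlation_free n T = (\<forall>p\<in>leaf_paths T. \<forall>i<n. \<forall>j<n. i \<noteq> j \<longrightarrow>
      fixed n p (\<lambda>x. x i * x j) \<longrightarrow> fixed n p (\<lambda>x. x i) \<and> fixed n p (\<lambda>x. x j))"

end

theory Submission imports Defs begin

definition fixedC :: "(nat \<Rightarrow> int) set \<Rightarrow> ((nat \<Rightarrow> int) \<Rightarrow> int) \<Rightarrow> bool" where
  "fixedC C f = (\<forall>x\<in>C. \<forall>y\<in>C. f x = f y)"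

definition Ifx :: "(nat \<Rightarrow> int) set \<Rightarrow> nat \<Rightarrow> nat set" where
  "Ifx C n = {i. i < n \<and> fixedC C (\<lambda>x. x i)}"

definition good :: "nat \<Rightarrow> (nat \<Rightarrow> int) set \<Rightarrow> bool" where
  "good n C = (\<forall>i<n. \<forall>j<n. i \<noteq> j \<longrightarrow> fixedC C (\<lambda>x. x i * x j) \<longrightarrow>
      fixedC C (\<lambda>x. x i) \<and> fixedC C (\<lambda>x. x j))"

lemma consistent_Cons: "consistent n ((S,b)#p) = {x \<in> consistent n p. (\<Prod>i\<in>S. x i) = b}"
  by (auto simp: consistent_def)

lemma consistent_set: "set p = set p' \<Longrightarrow> consistent n p = consistent n p'"
  by (simp add: consistent_def)

lemma consistent_sub: "consistent n p \<subseteq> cube n"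
  by (auto simp: consistent_def)

lemma cube_pm: "x \<in> cube n \<Longrightarrow> x k = 1 \<or> x k = -1"
  by (cases "k < n") (auto simp: cube_def)

lemma finite_cube: "finite (cube n)"
proof -
  have "cube n \<subseteq> {f. \<forall>x. (x \<in> {..<n} \<longrightarrow> f x \<in> {-1,1}) \<and> (x \<notin> {..<n} \<longrightarrow> f x = 1)}"
    by (auto simp: cube_def)
  moreover have "finite {f. \<forall>x. (x \<in> {..<n} \<longrightarrow> f x \<in> {-1::int,1}) \<and> (x \<notin> {..<n} \<longrightarrow> f x = 1)}"
    by (rule finite_set_of_finite_funs) auto
  ultimately show ?thesis by (rule finite_subset)
qed

lemma finite_consistent: "finite (consistent n p)"
  using finite_subset[OF consistent_sub finite_cube] .

lemma prod_pm: "(\<forall>k. x k = 1 \<or> x k = (-1::int)) \<Longrightarrow> (\<Prod>k\<in>S. x k) = 1 \<or> (\<Prod>k\<in>S. x k) = -1"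
proof (cases "finite S")
  case True
  assume h: "\<forall>k. x k = 1 \<or> x k = (-1::int)"
  from True show ?thesis
  proof (induction S rule: finite_induct)
    case empty then show ?case by simp
  next
    case (insert a F)
    then show ?case using h[rule_format, of a] by auto
  qed
qed simp

lemma sq1: "x \<in> cube n \<Longrightarrow> x k * x k = 1"
  using cube_pm[of x n k] by auto

lemma halving:
  assumes ne: "{x \<in> consistent n p. (\<Prod>i\<in>S. x i) = b} \<noteq> {}"
  shows "card (consistent n p) \<le> 2 * card {x \<in> consistent n p. (\<Prod>i\<in>S. x i) = b}"
proof -
  let ?C = "consistent n p"
  let ?C' = "{x \<in> ?C. (\<Prod>i\<in>S. x i) = b}"
  have fin: "finite ?C" by (rule finite_consistent)
  from ne obtain a where a: "a \<in> ?C" "(\<Prod>i\<in>S. a i) = b" by auto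
  have acube: "a \<in> cube n" using a consistent_sub by auto
  show ?thesis
  proof (cases "?C - ?C' = {}")
    case True
    then have "?C = ?C'" by auto
    then show ?thesis by simp
  next
    case False
    then obtain c where c: "c \<in> ?C" "(\<Prod>i\<in>S. c i) \<noteq> b" by auto
    have ccube: "c \<in> cube n" using c consistent_sub by auto
    have pmall: "\<And>y k. y \<in> cube n \<Longrightarrow> y k = 1 \<or> y k = -1" by (rule cube_pm)
    have pa: "(\<Prod>i\<in>S. a i) = 1 \<or> (\<Prod>i\<in>S. a i) = -1" using prod_pm pmall[OF acube] by blast
    have pc: "(\<Prod>i\<in>S. c i) = - b" using prod_pm[of c S] pmall[OF ccube] pa a(2) c(2) by auto
    define f where "f x = (\<lambda>k. x k * a k * c k)" for x :: "nat \<Rightarrow> int"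
    have fprod: "(\<Prod>i\<in>T. f x i) = (\<Prod>i\<in>T. x i) * (\<Prod>i\<in>T. a i) * (\<Prod>i\<in>T. c i)" for x T
      by (simp add: f_def prod.distrib)
    have fcube: "f x \<in> cube n" if "x \<in> cube n" for x
    proof -
      have "f x k = 1 \<or> f x k = -1" for k
        using cube_pm[OF that, of k] cube_pm[OF acube, of k] cube_pm[OF ccube, of k] by (auto simp: f_def)
      moreover have "f x k = 1" if "k \<ge> n" for k
        using \<open>x \<in> cube n\<close> acube ccube that by (simp add: f_def cube_def)
      ultimately show ?thesis unfolding cube_def by auto
    qed
    have fC: "f x \<in> ?C" if "x \<in> ?C" for x
    proof -
      have xc: "x \<in> cube n" using that consistent_sub by auto
      have "(\<Prod>i\<in>T. f x i) = bb" if "(T,bb) \<in> set p" for T bb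
      proof -
        have "(\<Prod>i\<in>T. x i) = bb" "(\<Prod>i\<in>T. a i) = bb" "(\<Prod>i\<in>T. c i) = bb"
          using \<open>x \<in> ?C\<close> a(1) c(1) that unfolding consistent_def by auto
        moreover have "bb = 1 \<or> bb = -1" using prod_pm[of a T] pmall[OF acube] calculation by auto
        ultimately show ?thesis using fprod by auto
      qed
      then show ?thesis using fcube[OF xc] unfolding consistent_def by auto
    qed
    have inj: "inj_on f (?C - ?C')"
    proof
      fix x y assume "x \<in> ?C - ?C'" "y \<in> ?C - ?C'" "f x = f y"
      show "x = y"
      proof
        fix k
        have "x k * a k * c k = y k * a k * c k" using \<open>f x = f y\<close> unfolding f_def by metis
        moreover have "a k \<noteq> 0" "c k \<noteq> 0" using pmall[OF acube, of k] pmall[OF ccube, of k] by auto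
        ultimately show "x k = y k" by simp
      qed
    qed
    have img: "f ` (?C - ?C') \<subseteq> ?C'"
    proof
      fix z assume "z \<in> f ` (?C - ?C')"
      then obtain x where x: "x \<in> ?C" "(\<Prod>i\<in>S. x i) \<noteq> b" "z = f x" by auto
      have xc: "x \<in> cube n" using x consistent_sub by auto
      have "(\<Prod>i\<in>S. x i) = - b" using prod_pm[of x S] pmall[OF xc] pa a(2) x(2) by auto
      then have "(\<Prod>i\<in>S. z i) = (-b) * b * (-b)" using fprod[of x S] x(3) a(2) pc by simp
      moreover have "(-b) * b * (-b) = b" using pa a(2) by auto
      ultimately have "(\<Prod>i\<in>S. z i) = b" by simp
      then show "z \<in> ?C'" using fC x by auto
    qed
    have "card (?C - ?C') \<le> card ?C'"
      using card_inj_on_le[OF inj img] fin by auto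
    moreover have "card ?C = card ?C' + card (?C - ?C')"
    proof -
      have sub: "?C' \<subseteq> ?C" by auto
      have "card (?C - ?C') = card ?C - card ?C'" using card_Diff_subset[OF finite_subset[OF sub fin] sub] .
      moreover have "card ?C' \<le> card ?C" using card_mono[OF fin sub] .
      ultimately show ?thesis by simp
    qed
    ultimately show ?thesis by simp
  qed
qed


lemma flip_cube:
  assumes "x \<in> cube n" "i < n"
  shows "x(i := - x i) \<in> cube n"
proof -
  have "(x(i := - x i)) k = -1 \<or> (x(i := - x i)) k = 1" for k
    using cube_pm[OF assms(1), of k] by (cases "k = i") auto
  moreover have "(x(i := - x i)) k = 1" if "k \<ge> n" for k
    using assms that by (simp add: cube_def)
  ultimately show ?thesis unfolding cube_def by blast
qed

lemma card_fix_aux: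
  assumes a: "a \<in> cube n"
  shows "F \<subseteq> {..<n} \<Longrightarrow> card {x \<in> cube n. \<forall>k\<in>{..<n}-F. x k = a k} = 2 ^ card F"
proof (induction F rule: infinite_finite_induct)
  case (infinite F)
  have "finite F" using infinite.prems by (rule finite_subset) simp
  with infinite.hyps show ?case by simp
next
  case empty
  have "{x \<in> cube n. \<forall>k\<in>{..<n}-{}. x k = a k} = {a}"
  proof (intro equalityI subsetI)
    fix x assume x: "x \<in> {x \<in> cube n. \<forall>k\<in>{..<n}-{}. x k = a k}"
    have "x k = a k" for k
    proof (cases "k < n")
      case True then show ?thesis using x by simp
    next
      case False then show ?thesis using x a by (simp add: cube_def)
    qed
    then show "x \<in> {a}" by auto
  next
    fix x assume "x \<in> {a}" then show "x \<in> {x \<in> cube n. \<forall>k\<in>{..<n}-{}. x k = a k}" using a by simp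
  qed
  then show ?case by simp
next
  case (insert i F)
  let ?A = "{x \<in> cube n. \<forall>k\<in>{..<n}-insert i F. x k = a k}"
  let ?A1 = "{x \<in> cube n. \<forall>k\<in>{..<n}-F. x k = a k}"
  have i: "i < n" using insert by auto
  have IH: "card ?A1 = 2 ^ card F" using insert by auto
  have fA: "finite ?A" using finite_cube by auto
  have sub: "?A1 \<subseteq> ?A" by auto
  define g where "g x = x(i := - x i)" for x :: "nat \<Rightarrow> int"
  have gg: "g (g x) = x" for x by (simp add: g_def)
  have ai: "a i = 1 \<or> a i = -1" using cube_pm[OF a] .
  have img: "g ` ?A1 = ?A - ?A1"
  proof (intro equalityI subsetI)
    fix y assume "y \<in> g ` ?A1"
    then obtain x where x: "x \<in> ?A1" "y = g x" by auto
    have xc: "x \<in> cube n" using x by simp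
    have "y \<in> cube n" using flip_cube[OF xc i] x(2) by (simp add: g_def)
    moreover have "\<forall>k\<in>{..<n}-insert i F. y k = a k" using x unfolding g_def by auto
    moreover have "x i = a i" using x(1) i insert(2) by auto
    then have "y i \<noteq> a i" using x(2) ai unfolding g_def by auto
    ultimately show "y \<in> ?A - ?A1" using i insert(2) by auto
  next
    fix y assume y: "y \<in> ?A - ?A1"
    then have yc: "y \<in> cube n" by auto
    have "y i \<noteq> a i" using y by auto
    then have yi: "g y i = a i" using cube_pm[OF yc, of i] ai by (auto simp: g_def)
    have "g y \<in> cube n" using flip_cube[OF yc i] by (simp add: g_def)
    moreover have "\<forall>k\<in>{..<n}-F. g y k = a k"
    proof
      fix k assume k: "k \<in> {..<n}-F"
      show "g y k = a k"
      proof (cases "k = i")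
        case True then show ?thesis using yi by simp
      next
        case False then show ?thesis using y k by (simp add: g_def)
      qed
    qed
    ultimately have "g y \<in> ?A1" by simp
    then show "y \<in> g ` ?A1" by (rule image_eqI[rotated]) (simp add: gg)
  qed
  have inj: "inj_on g ?A1" by (rule inj_on_inverseI[where g=g]) (rule gg)
  have "card (?A - ?A1) = card ?A1" using card_image[OF inj] img by simp
  moreover have "card (?A - ?A1) = card ?A - card ?A1"
    using card_Diff_subset[OF finite_subset[OF sub fA] sub] .
  moreover have "card ?A1 \<le> card ?A" using card_mono[OF fA sub] .
  ultimately have "card ?A = 2 * card ?A1" by simp
  then show ?case using IH insert by simp
qed
lemma card_fix:
  assumes a: "a \<in> cube n" and G: "G \<subseteq> {..<n}"
  shows "card {x \<in> cube n. \<forall>k\<in>G. x k = a k} * 2 ^ card G = 2 ^ n"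
proof -
  have "{..<n} - ({..<n} - G) = G" using G by auto
  then have "card {x \<in> cube n. \<forall>k\<in>G. x k = a k} = 2 ^ card ({..<n} - G)"
    using card_fix_aux[OF a, of "{..<n} - G"] by simp
  moreover have "card ({..<n} - G) + card G = n"
  proof -
    have "card ({..<n} - G) = card {..<n} - card G"
      using card_Diff_subset[OF finite_subset[OF G finite_lessThan] G] .
    moreover have "card G \<le> card {..<n}" using card_mono[OF finite_lessThan G] .
    ultimately show ?thesis by simp
  qed
  ultimately show ?thesis by (simp add: power_add[symmetric])
qed

lemma card_cube: "card (cube n) = 2 ^ n"
proof -
  have a: "(\<lambda>_. 1) \<in> cube n" by (simp add: cube_def)
  show ?thesis using card_fix[OF a, of "{}"] by simp
qed

lemma path_bound: "consistent n p \<noteq> {} \<Longrightarrow> 2 ^ n \<le> card (consistent n p) * 2 ^ length p"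
proof (induction p)
  case Nil
  have "consistent n [] = cube n" by (simp add: consistent_def)
  then show ?case using card_cube by simp
next
  case (Cons s p)
  obtain S b where s: "s = (S,b)" by force
  have ne: "{x \<in> consistent n p. (\<Prod>i\<in>S. x i) = b} \<noteq> {}"
    using Cons.prems s by (simp add: consistent_Cons)
  then have "consistent n p \<noteq> {}" by auto
  then have "2 ^ n \<le> card (consistent n p) * 2 ^ length p" using Cons.IH by auto
  also have "\<dots> \<le> 2 * card {x \<in> consistent n p. (\<Prod>i\<in>S. x i) = b} * 2 ^ length p"
    using halving[OF ne] by simp
  finally show ?case using s consistent_Cons[of n S b p] by (simp add: ac_simps)
qed

lemma length_leaf_paths: "q \<in> leaf_paths T \<Longrightarrow> length q \<le> depth T"
  by (induction T arbitrary: q) (auto simp: le_max_iff_disj)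

lemma upper:
  assumes ne: "consistent n p \<noteq> {}"
  shows "card (consistent n p) * 2 ^ card (Ifx (consistent n p) n) \<le> 2 ^ n"
proof -
  let ?C = "consistent n p"
  let ?I = "Ifx ?C n"
  obtain a where a: "a \<in> ?C" using ne by auto
  have ac: "a \<in> cube n" using a consistent_sub by auto
  have G: "?I \<subseteq> {..<n}" by (auto simp: Ifx_def)
  have "?C \<subseteq> {x \<in> cube n. \<forall>k\<in>?I. x k = a k}"
  proof
    fix x assume x: "x \<in> ?C"
    have "x \<in> cube n" using x consistent_sub by blast
    moreover have "\<forall>k\<in>?I. x k = a k"
    proof
      fix k assume "k \<in> ?I"
      then have "fixedC ?C (\<lambda>x. x k)" by (simp add: Ifx_def)
      then show "x k = a k" using x a unfolding fixedC_def by blast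
    qed
    ultimately show "x \<in> {x \<in> cube n. \<forall>k\<in>?I. x k = a k}" by simp
  qed
  then have "card ?C \<le> card {x \<in> cube n. \<forall>k\<in>?I. x k = a k}"
    by (rule card_mono[rotated]) (simp add: finite_cube)
  then have "card ?C * 2 ^ card ?I \<le> card {x \<in> cube n. \<forall>k\<in>?I. x k = a k} * 2 ^ card ?I"
    by simp
  then show ?thesis using card_fix[OF ac G] by simp
qed


lemma fixedC_mono: "D \<subseteq> C \<Longrightarrow> fixedC C f \<Longrightarrow> fixedC D f"
  unfolding fixedC_def by blast

lemma cons_single: "consistent n (({i},b)#p) = {x \<in> consistent n p. x i = b}"
  by (simp add: consistent_Cons)

lemma child_facts:
  assumes C: "C = consistent n p" and ij: "i < n" "j < n" "i \<noteq> j"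
    and fij: "fixedC C (\<lambda>x. x i * x j)" and nfi: "\<not> fixedC C (\<lambda>x. x i)"
  shows "C \<noteq> {}" "i \<notin> Ifx C n" "j \<notin> Ifx C n"
    "Ifx C n \<union> {i,j} \<subseteq> Ifx (consistent n (({i},b)#p)) n"
proof -
  show "C \<noteq> {}" using nfi unfolding fixedC_def by auto
  show "i \<notin> Ifx C n" using nfi by (simp add: Ifx_def)
  have xi: "x i = x j * (x i * x j)" if "x \<in> C" for x
  proof -
    have "x \<in> cube n" using that C consistent_sub by auto
    then have "x j * x j = 1" by (rule sq1)
    then show ?thesis by (metis mult.assoc mult.commute mult.right_neutral)
  qed
  have xj: "x j = x i * (x i * x j)" if "x \<in> C" for x
  proof -
    have "x \<in> cube n" using that C consistent_sub by auto
    then have "x i * x i = 1" by (rule sq1)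
    then show ?thesis by (metis mult.assoc mult.left_neutral)
  qed
  show "j \<notin> Ifx C n"
  proof
    assume "j \<in> Ifx C n"
    then have "fixedC C (\<lambda>x. x j)" by (simp add: Ifx_def)
    then have "fixedC C (\<lambda>x. x i)" using fij xi unfolding fixedC_def by metis
    then show False using nfi by simp
  qed
  let ?D = "consistent n (({i},b)#p)"
  have D: "?D = {x \<in> C. x i = b}" using C by (simp add: cons_single)
  have DC: "?D \<subseteq> C" using D by auto
  have "Ifx C n \<subseteq> Ifx ?D n" using fixedC_mono[OF DC] by (auto simp: Ifx_def)
  moreover have fi: "fixedC ?D (\<lambda>x. x i)" using D by (simp add: fixedC_def)
  moreover have "fixedC ?D (\<lambda>x. x j)"
  proof -
    have "fixedC ?D (\<lambda>x. x i * x j)" using fixedC_mono[OF DC fij] .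
    then show ?thesis using fi xj DC unfolding fixedC_def by (metis subsetD)
  qed
  ultimately show "Ifx C n \<union> {i,j} \<subseteq> Ifx ?D n" using ij by (auto simp: Ifx_def)
qed

lemma bad_pair:
  assumes "\<not> good n C"
  obtains i j where "i < n" "j < n" "i \<noteq> j" "fixedC C (\<lambda>x. x i * x j)" "\<not> fixedC C (\<lambda>x. x i)"
proof -
  obtain i j where ij: "i < n" "j < n" "i \<noteq> j" "fixedC C (\<lambda>x. x i * x j)"
      "\<not> (fixedC C (\<lambda>x. x i) \<and> fixedC C (\<lambda>x. x j))"
    using assms unfolding good_def by blast
  show ?thesis
  proof (cases "fixedC C (\<lambda>x. x i)")
    case False then show ?thesis using that ij by blast
  next
    case True
    then have "\<not> fixedC C (\<lambda>x. x j)" using ij by blast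
    moreover have "fixedC C (\<lambda>x. x j * x i)" using ij(4) by (simp add: mult.commute)
    ultimately show ?thesis using that[of j i] ij by blast
  qed
qed

lemma finite_Ifx: "finite (Ifx C n)"
  by (rule finite_subset[of _ "{..<n}"]) (auto simp: Ifx_def)

lemma card_step:
  assumes "i \<notin> I" "j \<notin> I" "i \<noteq> j" "I \<union> {i,j} \<subseteq> J" "finite J"
  shows "card I + 2 \<le> card J"
proof -
  have fI: "finite I" using assms(4,5) by (meson finite_subset le_sup_iff)
  have "card (I \<union> {i,j}) = card I + 2" using assms(1-3) fI by simp
  moreover have "card (I \<union> {i,j}) \<le> card J" using card_mono[OF assms(5,4)] .
  ultimately show ?thesis by simp
qed

lemma ext:
  "consistent n p = {} \<or> 2 ^ n \<le> card (consistent n p) * 2 ^ card (Ifx (consistent n p) n) * 2 ^ k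
   \<Longrightarrow> \<exists>t. valid_pdt n t \<and> depth t \<le> k \<and> (\<forall>q\<in>leaf_paths t. good n (consistent n (q @ p)))"
proof (induction k arbitrary: p)
  case 0
  let ?C = "consistent n p"
  show ?case
  proof (cases "good n ?C")
    case True
    then show ?thesis by (intro exI[of _ Leaf]) simp
  next
    case False
    then obtain i j where ij: "i < n" "j < n" "i \<noteq> j" "fixedC ?C (\<lambda>x. x i * x j)"
      "\<not> fixedC ?C (\<lambda>x. x i)" by (rule bad_pair)
    note cf = child_facts[OF refl ij]
    obtain x0 where x0: "x0 \<in> ?C" using cf(1) by auto
    define b where "b = x0 i"
    let ?D = "consistent n (({i},b)#p)"
    have Dne: "?D \<noteq> {}" using x0 by (auto simp: cons_single b_def)
    have h1: "card ?C \<le> 2 * card ?D"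
      using halving[of n p "{i}" b] Dne by (simp add: consistent_Cons)
    have h2: "card (Ifx ?C n) + 2 \<le> card (Ifx ?D n)"
      by (rule card_step[OF cf(2) cf(3) ij(3) cf(4) finite_Ifx])
    have h3: "card ?D * 2 ^ card (Ifx ?D n) \<le> 2 ^ n" by (rule upper[OF Dne])
    have h0: "2 ^ n \<le> card ?C * 2 ^ card (Ifx ?C n)" using "0.prems" cf(1) by simp
    have pos: "card ?D > 0" using Dne finite_consistent card_gt_0_iff by blast
    let ?a = "card (Ifx ?C n)"
    have "(2::nat) ^ n \<le> 2 * card ?D * 2 ^ ?a" using h0 h1 by (meson le_trans mult_le_mono1)
    also have "\<dots> < card ?D * 2 ^ (?a + 2)" using pos by simp
    also have "\<dots> \<le> card ?D * 2 ^ card (Ifx ?D n)"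
      using h2 by (intro mult_le_mono2 power_increasing) auto
    also have "\<dots> \<le> 2 ^ n" by (rule h3)
    finally show ?thesis by simp
  qed
next
  case (Suc k)
  let ?C = "consistent n p"
  show ?case
  proof (cases "good n ?C")
    case True
    then show ?thesis by (intro exI[of _ Leaf]) simp
  next
    case False
    then obtain i j where ij: "i < n" "j < n" "i \<noteq> j" "fixedC ?C (\<lambda>x. x i * x j)"
      "\<not> fixedC ?C (\<lambda>x. x i)" by (rule bad_pair)
    note cf = child_facts[OF refl ij]
    have child: "\<exists>t. valid_pdt n t \<and> depth t \<le> k \<and>
        (\<forall>q\<in>leaf_paths t. good n (consistent n (q @ (({i},b)#p))))" for b
    proof (rule Suc.IH)
      let ?D = "consistent n (({i},b)#p)"
      show "?D = {} \<or> 2 ^ n \<le> card ?D * 2 ^ card (Ifx ?D n) * 2 ^ k"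
      proof (cases "?D = {}")
        case False
        have h1: "card ?C \<le> 2 * card ?D"
          using halving[of n p "{i}" b] False by (simp add: consistent_Cons)
        have h2: "card (Ifx ?C n) + 2 \<le> card (Ifx ?D n)"
          by (rule card_step[OF cf(2) cf(3) ij(3) cf(4) finite_Ifx])
        have h0: "2 ^ n \<le> card ?C * 2 ^ card (Ifx ?C n) * 2 ^ Suc k" using Suc.prems cf(1) by simp
        let ?a = "card (Ifx ?C n)"
        have "(2::nat) ^ n \<le> 2 * card ?D * 2 ^ ?a * 2 ^ Suc k"
          using h0 h1 by (meson le_trans mult_le_mono1)
        also have "\<dots> = card ?D * 2 ^ (?a + 2) * 2 ^ k" by (simp add: power_add)
        also have "\<dots> \<le> card ?D * 2 ^ card (Ifx ?D n) * 2 ^ k"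
          using h2 by (intro mult_le_mono1 mult_le_mono2 power_increasing) auto
        finally show ?thesis by simp
      qed simp
    qed
    obtain tm where tm: "valid_pdt n tm" "depth tm \<le> k"
        "\<forall>q\<in>leaf_paths tm. good n (consistent n (q @ (({i},-1)#p)))" using child by blast
    obtain tp where tp: "valid_pdt n tp" "depth tp \<le> k"
        "\<forall>q\<in>leaf_paths tp. good n (consistent n (q @ (({i},1)#p)))" using child by blast
    have eqs: "consistent n ((s # q) @ p) = consistent n (q @ (s # p))" for s q
      by (rule consistent_set) auto
    show ?thesis
      by (intro exI[of _ "Node {i} tm tp"]) (use tm tp ij eqs in auto)
  qed
qed

lemma refine:
  "valid_pdt n T \<Longrightarrow>
   (\<forall>q\<in>leaf_paths T. consistent n (q @ p) = {} \<or> 2 ^ n \<le> card (consistent n (q @ p)) * 2 ^ D) \<Longrightarrow>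
   \<exists>T'. valid_pdt n T' \<and> refines T T' \<and> depth T' \<le> depth T + D \<and>
        (\<forall>q\<in>leaf_paths T'. good n (consistent n (q @ p)))"
proof (induction T arbitrary: p)
  case Leaf
  let ?C = "consistent n p"
  have "?C = {} \<or> 2 ^ n \<le> card ?C * 2 ^ D" using Leaf.prems(2) by simp
  then have "?C = {} \<or> 2 ^ n \<le> card ?C * 2 ^ card (Ifx ?C n) * 2 ^ D"
  proof (elim disjE)
    assume h: "2 ^ n \<le> card ?C * 2 ^ D"
    have "card ?C * 2 ^ D \<le> card ?C * 2 ^ card (Ifx ?C n) * 2 ^ D" by simp
    then show ?thesis using h by linarith
  qed simp
  then obtain t where "valid_pdt n t \<and> depth t \<le> D \<and> (\<forall>q\<in>leaf_paths t. good n (consistent n (q @ p)))"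
    using ext by blast
  then show ?case by (intro exI[of _ t]) simp
next
  case (Node S l r)
  have eqs: "consistent n ((s # q) @ p) = consistent n (q @ (s # p))" for s q
    by (rule consistent_set) auto
  have "\<exists>T'. valid_pdt n T' \<and> refines l T' \<and> depth T' \<le> depth l + D \<and>
        (\<forall>q\<in>leaf_paths T'. good n (consistent n (q @ ((S,-1)#p))))"
  proof (rule Node.IH(1))
    show "valid_pdt n l" using Node.prems by simp
    show "\<forall>q\<in>leaf_paths l. consistent n (q @ (S,-1)#p) = {} \<or>
        2 ^ n \<le> card (consistent n (q @ (S,-1)#p)) * 2 ^ D"
    proof
      fix q assume "q \<in> leaf_paths l"
      then have m: "(S,-1)#q \<in> leaf_paths (Node S l r)" by simp
      then show "consistent n (q @ (S,-1)#p) = {} \<or> 2 ^ n \<le> card (consistent n (q @ (S,-1)#p)) * 2 ^ D"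
        using bspec[OF Node.prems(2) m] eqs[of "(S,-1)" q] by simp
    qed
  qed
  then obtain l' where l': "valid_pdt n l'" "refines l l'" "depth l' \<le> depth l + D"
        "\<forall>q\<in>leaf_paths l'. good n (consistent n (q @ ((S,-1)#p)))" by blast
  have "\<exists>T'. valid_pdt n T' \<and> refines r T' \<and> depth T' \<le> depth r + D \<and>
        (\<forall>q\<in>leaf_paths T'. good n (consistent n (q @ ((S,1)#p))))"
  proof (rule Node.IH(2))
    show "valid_pdt n r" using Node.prems by simp
    show "\<forall>q\<in>leaf_paths r. consistent n (q @ (S,1)#p) = {} \<or>
        2 ^ n \<le> card (consistent n (q @ (S,1)#p)) * 2 ^ D"
    proof
      fix q assume "q \<in> leaf_paths r"
      then have m: "(S,1)#q \<in> leaf_paths (Node S l r)" by simp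
      then show "consistent n (q @ (S,1)#p) = {} \<or> 2 ^ n \<le> card (consistent n (q @ (S,1)#p)) * 2 ^ D"
        using bspec[OF Node.prems(2) m] eqs[of "(S,1)" q] by simp
    qed
  qed
  then obtain r' where r': "valid_pdt n r'" "refines r r'" "depth r' \<le> depth r + D"
        "\<forall>q\<in>leaf_paths r'. good n (consistent n (q @ ((S,1)#p)))" by blast
  show ?case
    by (intro exI[of _ "Node S l' r'"]) (use l' r' Node.prems eqs in auto)
qed

lemma fixed_eq: "fixed n p f = fixedC (consistent n p) f"
  by (simp add: fixed_def fixedC_def)

lemma cf_of_good: "\<forall>q\<in>leaf_paths T. good n (consistent n (q @ [])) \<Longrightarrow> correlation_free n T"
  unfolding correlation_free_def good_def fixed_eq by simp

theorem proposition2: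
  fixes n d :: nat and T :: pdt
  assumes "valid_pdt n T" and "depth T = d"
  shows "\<exists>T'. valid_pdt n T' \<and> refines T T' \<and> correlation_free n T' \<and> depth T' \<le> 2 * d"
proof -
  have "\<forall>q\<in>leaf_paths T. consistent n (q @ []) = {} \<or> 2 ^ n \<le> card (consistent n (q @ [])) * 2 ^ d"
  proof
    fix q assume q: "q \<in> leaf_paths T"
    show "consistent n (q @ []) = {} \<or> 2 ^ n \<le> card (consistent n (q @ [])) * 2 ^ d"
    proof (cases "consistent n q = {}")
      case False
      have "2 ^ n \<le> card (consistent n q) * 2 ^ length q" by (rule path_bound[OF False])
      also have "\<dots> \<le> card (consistent n q) * 2 ^ d"
      proof -
        have "length q \<le> d" using length_leaf_paths[OF q] assms(2) by simp
        then have "(2::nat) ^ length q \<le> 2 ^ d" by (rule power_increasing) simp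
        then show ?thesis by (rule mult_le_mono2)
      qed
      finally show ?thesis by simp
    qed simp
  qed
  then obtain T' where T': "valid_pdt n T'" "refines T T'" "depth T' \<le> depth T + d"
      "\<forall>q\<in>leaf_paths T'. good n (consistent n (q @ []))"
    using refine[OF assms(1)] by blast
  have "correlation_free n T'"
    using T'(4) by (rule cf_of_good)
  then show ?thesis using T' assms(2) by (intro exI[of _ T']) simp
qed

end
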